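(* Let $\Theta\subseteq\mathbb{R}^d$ be a $C^3$ hypersurface for which there exists $\varepsilon_0>0$ such that every $x\in\mathbb{R}^d$ with $d(x,\Theta)<\varepsilon_0$ has a unique point $p\in\Theta$ with $\|x-p\|=d(x,\Theta)$. Then for all $x,y\in\mathbb{R}^d$ and $\eta>0$ there exists a continuous curve $\gamma$ from $x$ to $y$ with $\ell(\gamma)<\|x-y\|+\eta$ such that $\gamma$ intersects $\Theta$ in only finitely many points.
   Context: A hypersurface is a $(d-1)$-dimensional submanifold of $\mathbb{R}^d$. $d(x,\Theta)=\inf_{y\in\Theta}\|x-y\|$. Length of a continuous curve $\gamma:[0,1]\to\mathbb{R}^d$: $\ell(\gamma)=\sup\sum_k\|\gamma(t_k)-\gamma(t_{k-1})\|$ over partitions of $[0,1]$. *)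

theory Defs
  imports "HOL-Analysis.Analysis"
begin

fun Ck_on :: "nat \<Rightarrow> 'a::euclidean_space set \<Rightarrow> ('a \<Rightarrow> 'b::real_normed_vector) \<Rightarrow> bool" where
  "Ck_on 0 U f = continuous_on U f"
| "Ck_on (Suc k) U f =
     (\<exists>f'. (\<forall>x\<in>U. (f has_derivative f' x) (at x)) \<and> (\<forall>i\<in>Basis. Ck_on k U (\<lambda>x. f' x i)))"

definition Ck_diffeo :: "nat \<Rightarrow> 'a::euclidean_space set \<Rightarrow> 'a set \<Rightarrow> ('a \<Rightarrow> 'a) \<Rightarrow> bool" where
  "Ck_diffeo k U V \<phi> \<longleftrightarrow> open U \<and> open V \<and>
     (\<exists>\<psi>. Ck_on k U \<phi> \<and> Ck_on k V \<psi> \<and> \<phi> ` U = V \<and>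
          (\<forall>x\<in>U. \<psi> (\<phi> x) = x) \<and> (\<forall>y\<in>V. \<phi> (\<psi> y) = y))"

text \<open>A C^k hypersurface (embedded submanifold of codimension one) of the
  Euclidean space 'a (= R^d with d = DIM('a)): every point has a C^k slice chart
  flattening the set onto a coordinate hyperplane.\<close>
definition Ck_hypersurface :: "nat \<Rightarrow> 'a::euclidean_space set \<Rightarrow> bool" where
  "Ck_hypersurface k \<Theta> \<longleftrightarrow>
     (\<forall>p\<in>\<Theta>. \<exists>U V \<phi> b. p \<in> U \<and> Ck_diffeo k U V \<phi> \<and> b \<in> Basis \<and>
                     \<phi> ` (U \<inter> \<Theta>) = V \<inter> {z. z \<bullet> b = 0})"

definition curve_length :: "(real \<Rightarrow> 'a::real_normed_vector) \<Rightarrow> ereal" where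
  "curve_length \<gamma> = (SUP (n, t) \<in> {(n, t). t 0 = 0 \<and> t n = 1 \<and> (\<forall>k<n. t k \<le> t (Suc k))}.
       ereal (\<Sum>k\<in>{1..n}. norm (\<gamma> (t k) - \<gamma> (t (k - 1)))))"

end

theory Submission
  imports Defs
begin


typedef (overloaded) ('a::euclidean_space) bidx = "Basis :: 'a set" morphisms rep_b abs_b
  using nonempty_Basis by blast

lemma bidx_UNIV: "(UNIV :: 'a::euclidean_space bidx set) = abs_b ` Basis"
  by (metis type_definition.Abs_image type_definition_bidx)

instance bidx :: (euclidean_space) finite
  by standard (simp add: bidx_UNIV)

definition bnum :: "'a::euclidean_space bidx \<Rightarrow> nat" where
  "bnum i = to_nat_on (Basis::'a set) (rep_b i)"

lemma inj_bnum: "inj bnum"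
proof
  fix i j :: "'a bidx" assume "bnum i = bnum j"
  then have "rep_b i = rep_b j"
    unfolding bnum_def using inj_on_to_nat_on[of "Basis::'a set"] rep_b
    by (metis countable_finite finite_Basis inj_on_def)
  then show "i = j" by (simp add: rep_b_inject)
qed

instantiation bidx :: (euclidean_space) linorder
begin
definition less_eq_bidx :: "'a bidx \<Rightarrow> 'a bidx \<Rightarrow> bool" where "less_eq_bidx i j = (bnum i \<le> bnum j)"
definition less_bidx :: "'a bidx \<Rightarrow> 'a bidx \<Rightarrow> bool" where "less_bidx i j = (bnum i < bnum j)"
instance
  by standard (auto simp: less_eq_bidx_def less_bidx_def dest: injD[OF inj_bnum])
end

instance bidx :: (euclidean_space) wellorder
proof
  fix P :: "'a bidx \<Rightarrow> bool" and a :: "'a bidx"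
  assume H: "\<And>x. (\<And>y. y < x \<Longrightarrow> P y) \<Longrightarrow> P x"
  show "P a"
    by (induction a rule: measure_induct_rule[of bnum]) (rule H, simp add: less_bidx_def)
qed

lemma card_bidx: "CARD('a::euclidean_space bidx) = DIM('a)"
proof -
  have "inj_on (abs_b :: 'a \<Rightarrow> 'a bidx) Basis" by (meson abs_b_inject inj_onI)
  then show ?thesis by (simp add: bidx_UNIV card_image)
qed

definition toV :: "'a::euclidean_space \<Rightarrow> real^('a bidx)" where
  "toV x = (\<chi> i. x \<bullet> rep_b i)"
definition fromV :: "real^('a::euclidean_space bidx) \<Rightarrow> 'a" where
  "fromV v = (\<Sum>i\<in>UNIV. (v $ i) *\<^sub>R rep_b i)"

lemma linear_toV: "linear toV"
  unfolding toV_def by (auto intro!: linearI simp: vec_eq_iff inner_add_left)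

lemma linear_fromV: "linear fromV"
  unfolding fromV_def by (auto intro!: linearI simp: scaleR_add_left sum.distrib scaleR_sum_right)

lemma fromV_toV: "fromV (toV x) = x"
proof -
  have "fromV (toV x) = (\<Sum>i\<in>UNIV. (x \<bullet> rep_b i) *\<^sub>R rep_b i)"
    by (simp add: fromV_def toV_def)
  also have "\<dots> = (\<Sum>b\<in>Basis. (x \<bullet> b) *\<^sub>R b)"
    by (rule sum.reindex_bij_betw) (metis bij_betw_def inj_on_def rep_b rep_b_inject type_definition.Rep_range type_definition_bidx)
  finally show ?thesis by (simp add: euclidean_representation)
qed

lemma toV_fromV: "toV (fromV v) = v"
proof -
  have "fromV v \<bullet> rep_b j = v $ j" for j
  proof -
    have "fromV v \<bullet> rep_b j = (\<Sum>i\<in>UNIV. v $ i * (rep_b i \<bullet> rep_b j))"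
      by (simp add: fromV_def inner_sum_left)
    also have "\<dots> = (\<Sum>i\<in>{j}. v $ i * (rep_b i \<bullet> rep_b j))"
      by (rule sum.mono_neutral_right) (auto simp: rep_b inner_not_same_Basis rep_b_inject)
    finally show ?thesis using rep_b[of j] by simp
  qed
  then show ?thesis by (simp add: toV_def vec_eq_iff)
qed

lemma sard_eucl:
  fixes f :: "'a::euclidean_space \<Rightarrow> 'a"
  assumes der: "\<And>x. x \<in> S \<Longrightarrow> (f has_derivative f' x) (at x within S)"
    and ni: "\<And>x. x \<in> S \<Longrightarrow> \<not> inj (f' x)"
  shows "negligible (f ` S)"
proof -
  define F where "F = toV \<circ> f \<circ> fromV"
  define F' where "F' = (\<lambda>v. toV \<circ> f' (fromV v) \<circ> fromV)"
  define S' where "S' = toV ` S"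
  have fS: "fromV ` S' = S" by (simp add: S'_def image_image fromV_toV)
  have lt: "bounded_linear toV" "bounded_linear fromV"
    using linear_toV linear_fromV by (auto simp: linear_conv_bounded_linear)
  have dF: "(F has_derivative F' v) (at v within S')" if "v \<in> S'" for v
  proof -
    have "fromV v \<in> S" using that fS by blast
    have "((f \<circ> fromV) has_derivative (f' (fromV v) \<circ> fromV)) (at v within S')"
      by (rule diff_chain_within) (use lt(2) der[OF \<open>fromV v \<in> S\<close>] fS in \<open>auto intro: bounded_linear.has_derivative\<close>)
    then have "((toV \<circ> (f \<circ> fromV)) has_derivative (toV \<circ> (f' (fromV v) \<circ> fromV))) (at v within S')"
      by (rule diff_chain_within) (use lt(1) in \<open>auto intro: bounded_linear.has_derivative\<close>)
    then show ?thesis by (simp add: F_def F'_def o_assoc)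
  qed
  have lin: "linear (F' v)" if "v \<in> S'" for v
    using dF[OF that] has_derivative_linear by blast
  have rk: "rank (matrix (F' v)) < CARD('a bidx)" if "v \<in> S'" for v
  proof -
    have "fromV v \<in> S" using that fS by blast
    obtain h h' where "h \<noteq> h'" "f' (fromV v) h = f' (fromV v) h'"
      using ni[OF \<open>fromV v \<in> S\<close>] unfolding inj_def by blast
    then have "\<not> inj (F' v)"
      unfolding F'_def inj_def
      by (metis comp_apply fromV_toV)
    then show ?thesis
      using less_rank_noninjective[of "matrix (F' v)"] matrix_works[OF lin[OF that, folded linear_matrix_vector_mul_eq]]
      by (metis ext)
  qed
  have "negligible (F ` S')"
    by (rule baby_Sard[OF _ dF rk]) auto
  then have "negligible (fromV ` (F ` S'))"
    by (intro negligible_differentiable_image_negligible[where f=fromV and S="F ` S'"])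
      (use lt card_bidx[where 'a='a] in \<open>auto intro: bounded_linear_imp_differentiable_on\<close>)
  moreover have "fromV ` (F ` S') = f ` S"
    by (auto simp: F_def S'_def image_image fromV_toV)
  ultimately show ?thesis by simp
qed



lemma sum_tele: "(\<Sum>k\<in>{1..n::nat}. (t k - t (k - 1))) = t n - (t 0 :: real)"
proof (induction n)
  case (Suc n)
  have "{1..Suc n} = insert (Suc n) {1..n}" by auto
  then show ?case using Suc by simp
qed simp

lemma chain_mono:
  fixes t :: "nat \<Rightarrow> real"
  assumes "\<forall>k<n. t k \<le> t (Suc k)"
  shows "i \<le> j \<Longrightarrow> j \<le> n \<Longrightarrow> t i \<le> t j"
proof (induction j)
  case 0 then show ?case by simp
next
  case (Suc j)
  show ?case
  proof (cases "i = Suc j")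
    case False
    then have "t i \<le> t j" using Suc by simp
    also have "t j \<le> t (Suc j)" using assms Suc.prems by simp
    finally show ?thesis .
  qed simp
qed

lemma curve_length_lipschitz:
  fixes \<gamma> :: "real \<Rightarrow> 'a::real_normed_vector"
  assumes "\<And>s t. s \<in> {0..1} \<Longrightarrow> t \<in> {0..1} \<Longrightarrow> norm (\<gamma> s - \<gamma> t) \<le> L * \<bar>s - t\<bar>"
  shows "curve_length \<gamma> \<le> ereal L"
  unfolding curve_length_def
proof (rule SUP_least, clarify)
  fix n and t :: "nat \<Rightarrow> real"
  assume t0: "t 0 = 0" and tn: "t n = 1" and m: "\<forall>k<n. t k \<le> t (Suc k)"
  have tr: "t k \<in> {0..1}" if "k \<le> n" for k
    using chain_mono[OF m, of 0 k] chain_mono[OF m, of k n] that t0 tn by auto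
  have "(\<Sum>k\<in>{1..n}. norm (\<gamma> (t k) - \<gamma> (t (k - 1)))) \<le> (\<Sum>k\<in>{1..n}. L * (t k - t (k - 1)))"
  proof (rule sum_mono)
    fix k assume k: "k \<in> {1..n}"
    have "t (k - 1) \<le> t k" using m k by (metis Suc_diff_1 atLeastAtMost_iff diff_less le_less_trans less_numeral_extra(1) order_less_le_trans)
    then show "norm (\<gamma> (t k) - \<gamma> (t (k - 1))) \<le> L * (t k - t (k - 1))"
      using assms[OF tr tr, of k "k - 1"] k by auto
  qed
  also have "\<dots> = L * (\<Sum>k\<in>{1..n}. (t k - t (k - 1)))" by (simp add: sum_distrib_left)
  also have "\<dots> = L" by (simp only: sum_tele t0 tn) simp
  finally show "ereal (\<Sum>k\<in>{1..n}. norm (\<gamma> (t k) - \<gamma> (t (k - 1)))) \<le> ereal L" by simp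
qed

lemma join_lip:
  fixes x z y :: "'a::real_normed_vector"
  assumes "norm (z - x) \<le> M" "norm (y - z) \<le> M"
  assumes "s \<in> {0..1}" "t \<in> {0..1}"
  shows "norm ((linepath x z +++ linepath z y) s - (linepath x z +++ linepath z y) t) \<le> (2*M) * \<bar>s - t\<bar>"
proof -
  have M0: "M \<ge> 0" using assms(1) norm_ge_zero order_trans by blast
  let ?g = "linepath x z +++ linepath z y"
  have A: "?g u = x + (2*u) *\<^sub>R (z - x)" if "u \<le> 1/2" for u
    using that by (simp add: joinpaths_def linepath_def algebra_simps)
  have B: "?g u = z + (2*u - 1) *\<^sub>R (y - z)" if "\<not> u \<le> 1/2" for u
    using that by (simp add: joinpaths_def linepath_def algebra_simps)
  have key: "norm (?g s0 - ?g t0) \<le> (2*M) * \<bar>s0 - t0\<bar>" if "s0 \<le> 1/2" "\<not> t0 \<le> 1/2" for s0 t0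
  proof -
    have e1: "?g s0 - z = (1 - 2 * s0) *\<^sub>R (x - z)" using A[OF that(1)] by (simp add: algebra_simps)
    have n1: "norm (?g s0 - z) = (1 - 2 * s0) * norm (x - z)" unfolding e1 using that by simp
    have e2: "z - ?g t0 = (1 - 2*t0) *\<^sub>R (y - z)" using B[OF that(2)] by (simp add: algebra_simps)
    have n2: "norm (z - ?g t0) = (2*t0 - 1) * norm (y - z)" unfolding e2 using that by simp
    have tri: "norm (?g s0 - ?g t0) \<le> norm (?g s0 - z) + norm (z - ?g t0)" using norm_triangle_ineq[of "?g s0 - z" "z - ?g t0"] by simp
    have "(1 - 2 * s0) * norm (x - z) \<le> (1 - 2 * s0) * M" using that assms(1) by (intro mult_left_mono) (auto simp: norm_minus_commute)
    moreover have "(2*t0 - 1) * norm (y - z) \<le> (2*t0 - 1) * M" using that assms(2) by (intro mult_left_mono) auto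
    ultimately show ?thesis using tri n1 n2 that by (simp add: abs_if algebra_simps)
  qed
  have abs2: "\<bar>2*(s - t)\<bar> = 2 * \<bar>s - t\<bar>" by (simp only: abs_mult abs_numeral)
  show ?thesis
  proof (cases "s \<le> 1/2"; cases "t \<le> 1/2")
    assume "s \<le> 1/2" "t \<le> 1/2"
    then have "?g s - ?g t = (2*(s - t)) *\<^sub>R (z - x)" by (simp add: A algebra_simps)
    then have "norm (?g s - ?g t) = \<bar>2*(s - t)\<bar> * norm (z - x)" by (simp only: norm_scaleR)
    then have "norm (?g s - ?g t) = (2 * \<bar>s - t\<bar>) * norm (z - x)" using abs2 by (simp only:)
    also have "\<dots> \<le> (2 * \<bar>s - t\<bar>) * M" using assms by (intro mult_left_mono) auto
    finally show ?thesis by (simp add: algebra_simps)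
  next
    assume "\<not> s \<le> 1/2" "\<not> t \<le> 1/2"
    then have "?g s - ?g t = (2*(s - t)) *\<^sub>R (y - z)" by (simp add: B algebra_simps)
    then have "norm (?g s - ?g t) = \<bar>2*(s - t)\<bar> * norm (y - z)" by (simp only: norm_scaleR)
    then have "norm (?g s - ?g t) = (2 * \<bar>s - t\<bar>) * norm (y - z)" using abs2 by (simp only:)
    also have "\<dots> \<le> (2 * \<bar>s - t\<bar>) * M" using assms by (intro mult_left_mono) auto
    finally show ?thesis by (simp add: algebra_simps)
  next
    assume "s \<le> 1/2" "\<not> t \<le> 1/2" then show ?thesis using key by blast
  next
    assume "\<not> s \<le> 1/2" "t \<le> 1/2" then show ?thesis using key[of t s] by (simp add: norm_minus_commute abs_minus_commute)
  qed
qed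




definition chart :: "'a::euclidean_space set \<Rightarrow> 'a set \<Rightarrow> 'a set \<Rightarrow> ('a \<Rightarrow> 'a) \<Rightarrow> ('a \<Rightarrow> 'a) \<Rightarrow> 'a
   \<Rightarrow> ('a \<Rightarrow> 'a \<Rightarrow> 'a) \<Rightarrow> ('a \<Rightarrow> 'a \<Rightarrow> 'a) \<Rightarrow> bool" where
  "chart \<Theta> U V \<phi> \<psi> b \<phi>' \<psi>' \<longleftrightarrow> open U \<and> open V \<and>
     (\<forall>u\<in>U. (\<phi> has_derivative \<phi>' u) (at u)) \<and> (\<forall>v\<in>V. (\<psi> has_derivative \<psi>' v) (at v)) \<and>
     \<phi> ` U = V \<and> (\<forall>u\<in>U. \<psi> (\<phi> u) = u) \<and> (\<forall>v\<in>V. \<phi> (\<psi> v) = v) \<and> b \<in> Basis \<and>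
     \<phi> ` (U \<inter> \<Theta>) = V \<inter> {z. z \<bullet> b = 0}"

lemma Ck3_deriv:
  assumes "Ck_on 3 U f"
  shows "\<exists>f'. \<forall>x\<in>U. (f has_derivative f' x) (at x)"
proof -
  have "Ck_on (Suc 2) U f" using assms by (simp only: numeral_3_eq_3 numeral_2_eq_2)
  then show ?thesis by (simp only: Ck_on.simps(2)) blast
qed

lemma chart_exists:
  assumes "Ck_hypersurface 3 \<Theta>" "p \<in> \<Theta>"
  shows "\<exists>U V \<phi> \<psi> b \<phi>' \<psi>'. p \<in> U \<and> chart \<Theta> U V \<phi> \<psi> b \<phi>' \<psi>'"
proof -
  obtain U V \<phi> b where "p \<in> U" "Ck_diffeo 3 U V \<phi>" "b \<in> Basis" "\<phi> ` (U \<inter> \<Theta>) = V \<inter> {z. z \<bullet> b = 0}"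
    using assms unfolding Ck_hypersurface_def by blast
  moreover obtain \<psi> where "open U" "open V" "Ck_on 3 U \<phi>" "Ck_on 3 V \<psi>" "\<phi> ` U = V"
     "\<forall>x\<in>U. \<psi> (\<phi> x) = x" "\<forall>y\<in>V. \<phi> (\<psi> y) = y"
    using \<open>Ck_diffeo 3 U V \<phi>\<close> unfolding Ck_diffeo_def by blast
  moreover obtain \<phi>' where "\<forall>u\<in>U. (\<phi> has_derivative \<phi>' u) (at u)"
    using Ck3_deriv[OF \<open>Ck_on 3 U \<phi>\<close>] by blast
  moreover obtain \<psi>' where "\<forall>u\<in>V. (\<psi> has_derivative \<psi>' u) (at u)"
    using Ck3_deriv[OF \<open>Ck_on 3 V \<psi>\<close>] by blast
  ultimately have "p \<in> U \<and> chart \<Theta> U V \<phi> \<psi> b \<phi>' \<psi>'" unfolding chart_def by auto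
  then show ?thesis by blast
qed

lemma chart_bad:
  fixes x :: "'a::euclidean_space"
  assumes ch: "chart \<Theta> U V \<phi> \<psi> b \<phi>' \<psi>'"
  shows "\<exists>N. negligible N \<and> (\<forall>z q. q \<in> closed_segment x z \<and> q \<in> \<Theta> \<and> q \<in> U \<and>
             q islimpt (closed_segment x z \<inter> \<Theta>) \<longrightarrow> z \<in> N)"
proof -
  have oU: "open U" and oV: "open V" and d\<phi>: "\<And>u. u \<in> U \<Longrightarrow> (\<phi> has_derivative \<phi>' u) (at u)"
    and d\<psi>: "\<And>v. v \<in> V \<Longrightarrow> (\<psi> has_derivative \<psi>' v) (at v)"
    and im: "\<phi> ` U = V" and inv1: "\<And>u. u \<in> U \<Longrightarrow> \<psi> (\<phi> u) = u" and inv2: "\<And>v. v \<in> V \<Longrightarrow> \<phi> (\<psi> v) = v"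
    and b: "b \<in> Basis" and flat: "\<phi> ` (U \<inter> \<Theta>) = V \<inter> {z. z \<bullet> b = 0}"
    using ch unfolding chart_def by auto
  define P where "P = (\<lambda>w::'a. w - (w \<bullet> b) *\<^sub>R b)"
  define S where "S = {w. P w \<in> V}"
  define G where "G = (\<lambda>w. x + (w \<bullet> b) *\<^sub>R (\<psi> (P w) - x))"
  define G' where "G' = (\<lambda>w h. (h \<bullet> b) *\<^sub>R (\<psi> (P w) - x) + (w \<bullet> b) *\<^sub>R \<psi>' (P w) (P h))"
  define crit where "crit = {w \<in> S. \<not> inj (G' w)}"
  define H0 where "H0 = (if x \<in> U then {z. \<phi>' x (z - x) \<bullet> b = 0} else {})"
  have bb: "b \<bullet> b = 1" using b by simp
  have dP: "(P has_derivative P) (at w)" for w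
    unfolding P_def by (auto intro!: derivative_eq_intros)
  have dG: "(G has_derivative G' w) (at w)" if "w \<in> S" for w
  proof -
    have "((\<psi> \<circ> P) has_derivative (\<psi>' (P w) \<circ> P)) (at w)"
      by (rule diff_chain_at[OF dP d\<psi>]) (use that S_def in auto)
    then have d1: "((\<lambda>w. \<psi> (P w)) has_derivative (\<lambda>h. \<psi>' (P w) (P h))) (at w)"
      by (simp add: o_def)
    have "((\<lambda>w. x + (w \<bullet> b) *\<^sub>R (\<psi> (P w) - x)) has_derivative
       (\<lambda>h. 0 + ((w \<bullet> b) *\<^sub>R (\<psi>' (P w) (P h) - 0) + (h \<bullet> b) *\<^sub>R (\<psi> (P w) - x)))) (at w)"
      by (intro derivative_intros d1)
    then show ?thesis unfolding G_def G'_def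
      by (rule has_derivative_eq_rhs) (simp add: fun_eq_iff algebra_simps)
  qed
  have S_P: "w \<in> S \<longleftrightarrow> P w \<in> V" for w by (simp add: S_def)
  have neg1: "negligible (G ` crit)"
    by (rule sard_eucl[where f'=G']) (auto simp: crit_def intro: has_derivative_at_withinI dG)
  have neg2: "negligible H0"
  proof (cases "x \<in> U")
    case False then show ?thesis by (simp add: H0_def)
  next
    case True
    have dx: "(\<phi> has_derivative \<phi>' x) (at x)" using d\<phi> True by blast
    have "\<phi> x \<in> V" using im True by blast
    then have d2: "(\<psi> has_derivative \<psi>' (\<phi> x)) (at (\<phi> x))" using d\<psi> by blast
    have "((\<psi> \<circ> \<phi>) has_derivative (\<psi>' (\<phi> x) \<circ> \<phi>' x)) (at x)" by (rule diff_chain_at[OF dx d2])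
    then have "(id has_derivative (\<psi>' (\<phi> x) \<circ> \<phi>' x)) (at x)"
      by (rule has_derivative_transform_within_open[OF _ oU True]) (simp add: inv1)
    moreover have "(id has_derivative id) (at x)" by (simp add: id_def)
    ultimately have comp: "\<psi>' (\<phi> x) \<circ> \<phi>' x = id" by (rule has_derivative_unique)
    have lin: "linear (\<phi>' x)" using dx has_derivative_linear by blast
    have "inj (\<phi>' x)" using comp by (metis inj_on_id inj_on_imageI2)
    then have "surj (\<phi>' x)" using lin linear_injective_imp_surjective by blast
    then obtain h0 where h0: "\<phi>' x h0 = b" by (metis surjD)
    define a where "a = adjoint (\<phi>' x) b"
    have adj: "\<phi>' x h \<bullet> b = h \<bullet> a" for h using adjoint_works[OF lin] by (simp add: a_def)
    have "a \<noteq> 0" using adj[of h0] h0 bb by auto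
    have hz: "\<phi>' x (z - x) \<bullet> b = a \<bullet> z - a \<bullet> x" for z
      using adj[of "z - x"] by (simp add: inner_diff_right inner_commute)
    have "H0 = {z. a \<bullet> z = a \<bullet> x}"
      using True by (auto simp only: H0_def hz if_True)
    then show ?thesis using negligible_hyperplane \<open>a \<noteq> 0\<close> by auto
  qed
  have seg: "\<exists>s. 0 \<le> s \<and> s \<le> 1 \<and> y = x + s *\<^sub>R (z - x)" if "y \<in> closed_segment x z" for y z
    using that unfolding closed_segment_def by (auto simp: algebra_simps)
  have mem: "z \<in> G ` crit \<union> H0"
    if q1: "q \<in> closed_segment x z" and q2: "q \<in> \<Theta>" and q3: "q \<in> U"
      and q4: "q islimpt (closed_segment x z \<inter> \<Theta>)" for z q
  proof (cases "q = x")
    case True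
    have "x \<in> U" using True q3 by simp
    have "z \<noteq> x"
    proof
      assume "z = x"
      then show False using q4 True by (auto simp: islimpt_approachable dest: spec[of _ 1])
    qed
    have "\<phi>' x (z - x) \<bullet> b = 0"
    proof (rule ccontr)
      assume c: "\<phi>' x (z - x) \<bullet> b \<noteq> 0"
      define c0 where "c0 = \<bar>\<phi>' x (z - x) \<bullet> b\<bar>"
      have c0: "c0 > 0" using c by (simp add: c0_def)
      have nz: "norm (z - x) > 0" using \<open>z \<noteq> x\<close> by simp
      define e where "e = c0 / (2 * norm (z - x))"
      have e: "e > 0" using c0 nz by (simp add: e_def)
      have dx: "(\<phi> has_derivative \<phi>' x) (at x)" using d\<phi> \<open>x \<in> U\<close> by blast
      have lin: "linear (\<phi>' x)" using dx has_derivative_linear by blast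
      obtain d where d: "d > 0" "\<And>y. norm (y - x) < d \<Longrightarrow> norm (\<phi> y - \<phi> x - \<phi>' x (y - x)) \<le> e * norm (y - x)"
        using dx e unfolding has_derivative_at_alt by blast
      obtain r where r: "r > 0" "ball x r \<subseteq> U" using oU \<open>x \<in> U\<close> open_contains_ball by blast
      obtain q' where q': "q' \<in> closed_segment x z \<inter> \<Theta>" "q' \<noteq> x" "dist q' x < min d r"
        using q4 True d r unfolding islimpt_approachable by (metis min_less_iff_conj)
      obtain s where s: "0 \<le> s" "s \<le> 1" "q' = x + s *\<^sub>R (z - x)" using seg q' by blast
      have "s \<noteq> 0" using s q' by auto
      then have s0: "s > 0" using s by simp
      have "q' \<in> U" using r q' by (auto simp: dist_commute)
      then have "\<phi> q' \<bullet> b = 0" using flat q' by blast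
      have "\<phi> x \<bullet> b = 0" using flat \<open>x \<in> U\<close> q2 True by blast
      have nq: "norm (q' - x) = s * norm (z - x)" using s s0 by simp
      have "norm (q' - x) < d" using q' by (simp add: dist_norm)
      then have est: "norm (\<phi> q' - \<phi> x - \<phi>' x (q' - x)) \<le> e * norm (q' - x)" by (rule d(2))
      have "\<phi>' x (q' - x) = s *\<^sub>R \<phi>' x (z - x)" using s lin by (simp add: linear_cmul)
      then have "(\<phi> q' - \<phi> x - \<phi>' x (q' - x)) \<bullet> b = - (s * (\<phi>' x (z - x) \<bullet> b))"
        using \<open>\<phi> q' \<bullet> b = 0\<close> \<open>\<phi> x \<bullet> b = 0\<close> by (simp add: inner_diff_left)
      then have "s * c0 \<le> norm (\<phi> q' - \<phi> x - \<phi>' x (q' - x))"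
        using Basis_le_norm[OF b, of "\<phi> q' - \<phi> x - \<phi>' x (q' - x)"] s0 by (simp add: c0_def abs_mult)
      also have "\<dots> \<le> e * (s * norm (z - x))" using est nq by simp
      also have "\<dots> = s * c0 / 2" using nz by (simp add: e_def)
      finally show False using s0 c0 by simp
    qed
    then show ?thesis using \<open>x \<in> U\<close> by (simp add: H0_def)
  next
    case False
    obtain s0 where s0: "0 \<le> s0" "s0 \<le> 1" "q = x + s0 *\<^sub>R (z - x)" using seg q1 by blast
    have "s0 \<noteq> 0" using s0 False by auto
    then have s0p: "s0 > 0" using s0 by simp
    have "z \<noteq> x" using s0 False by auto
    then have nz: "norm (z - x) > 0" by simp
    define a0 where "a0 = \<phi> q"
    have a0: "a0 \<in> V" "a0 \<bullet> b = 0" using flat q2 q3 by (auto simp: a0_def)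
    define w0 where "w0 = a0 + (1 / s0) *\<^sub>R b"
    have w0b: "w0 \<bullet> b = 1 / s0" using a0 bb by (simp add: w0_def inner_add_left)
    have Pw0: "P w0 = a0" using w0b by (simp add: P_def w0_def)
    have w0S: "w0 \<in> S" using Pw0 a0 by (simp add: S_P)
    have "\<psi> a0 = q" using inv1 q3 by (simp add: a0_def)
    then have Gw0: "G w0 = z" using s0p by (simp add: G_def Pw0 w0b s0)
    have "\<not> inj (G' w0)"
    proof
      assume inj: "inj (G' w0)"
      have dw: "(G has_derivative G' w0) (at w0)" using dG w0S by blast
      have lin: "linear (G' w0)" using dw has_derivative_linear by blast
      obtain B where B: "B > 0" "\<And>h. B * norm h \<le> norm (G' w0 h)"
        using linear_inj_bounded_below_pos[OF lin inj] by blast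
      obtain d where d: "d > 0" "\<And>y. norm (y - w0) < d \<Longrightarrow> norm (G y - G w0 - G' w0 (y - w0)) \<le> (B/2) * norm (y - w0)"
        using dw B unfolding has_derivative_at_alt by (metis half_gt_zero)
      define \<tau> where "\<tau> = (\<lambda>y. ((y - x) \<bullet> (z - x)) / (norm (z - x))\<^sup>2)"
      define m where "m = (\<lambda>y. \<phi> y + (1 / \<tau> y) *\<^sub>R b)"
      have \<tau>lin: "\<tau> (x + t *\<^sub>R (z - x)) = t" for t
      proof -
        have A: "(norm (z - x))\<^sup>2 > 0" using nz by simp
        have "\<tau> (x + t *\<^sub>R (z - x)) = (t * (norm (z - x))\<^sup>2) / (norm (z - x))\<^sup>2"
          by (simp add: \<tau>_def dot_square_norm)
        then show ?thesis using A by (metis less_irrefl nonzero_mult_div_cancel_right)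
      qed
      have \<tau>q: "\<tau> q = s0" using \<tau>lin s0 by simp
      have "continuous (at q) \<phi>" using d\<phi>[OF q3] has_derivative_continuous by blast
      moreover have "continuous (at q) \<tau>" unfolding \<tau>_def using nz by (intro continuous_intros) auto
      ultimately have "continuous (at q) m" unfolding m_def using \<tau>q s0p
        by (intro continuous_intros) auto
      moreover have mq: "m q = w0" by (simp add: m_def \<tau>q a0_def w0_def)
      ultimately obtain \<delta> where \<delta>: "\<delta> > 0" "\<And>y. dist y q < \<delta> \<Longrightarrow> dist (m y) w0 < d"
        using d(1) unfolding continuous_at_eps_delta by metis
      obtain r where r: "r > 0" "ball q r \<subseteq> U" using oU q3 open_contains_ball by blast
      have "dist q x > 0" using False by simp
      obtain q' where q': "q' \<in> closed_segment x z \<inter> \<Theta>" "q' \<noteq> q" "dist q' q < min \<delta> (min r (dist q x))"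
        using q4 \<delta>(1) r(1) \<open>dist q x > 0\<close> unfolding islimpt_approachable
        by (metis min_less_iff_conj)
      obtain s where s: "0 \<le> s" "s \<le> 1" "q' = x + s *\<^sub>R (z - x)" using seg q' by blast
      have "q' \<noteq> x" using q' by (auto simp: dist_commute)
      then have "s \<noteq> 0" using s by auto
      have "q' \<in> U" using r q' by (auto simp: dist_commute)
      define a' where "a' = \<phi> q'"
      have a': "a' \<in> V" "a' \<bullet> b = 0" using flat q' \<open>q' \<in> U\<close> by (auto simp: a'_def)
      have mq': "m q' = a' + (1 / s) *\<^sub>R b" using \<tau>lin s by (simp add: m_def a'_def)
      have mb: "m q' \<bullet> b = 1 / s" using a' bb by (simp add: mq' inner_add_left)
      have Pm: "P (m q') = a'" using mb by (simp add: P_def mq')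
      have "\<psi> a' = q'" using inv1 \<open>q' \<in> U\<close> by (simp add: a'_def)
      then have "G (m q') = x + (1 / s) *\<^sub>R (q' - x)" unfolding G_def Pm mb by simp
      then have Gm: "G (m q') = z" using \<open>s \<noteq> 0\<close> s(3) by simp
      have ne: "m q' \<noteq> w0"
      proof
        assume eq: "m q' = w0"
        then have "1 / s = 1 / s0" using mb w0b by simp
        then have "a' = a0" using eq by (simp add: mq' w0_def)
        then show False using \<open>\<psi> a' = q'\<close> \<open>\<psi> a0 = q\<close> q' by simp
      qed
      have "norm (m q' - w0) < d" using \<delta>(2)[of q'] q' by (simp add: dist_norm)
      then have "norm (G (m q') - G w0 - G' w0 (m q' - w0)) \<le> (B/2) * norm (m q' - w0)" by (rule d(2))
      then have "norm (G' w0 (m q' - w0)) \<le> (B/2) * norm (m q' - w0)" using Gm Gw0 by simp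
      moreover have "B * norm (m q' - w0) \<le> norm (G' w0 (m q' - w0))" by (rule B(2))
      moreover have "norm (m q' - w0) > 0" using ne by simp
      moreover have "(B/2) * norm (m q' - w0) < B * norm (m q' - w0)"
        using B(1) \<open>norm (m q' - w0) > 0\<close> by simp
      ultimately show False by linarith
    qed
    then have "w0 \<in> crit" using w0S by (simp add: crit_def)
    then show ?thesis using Gw0 by blast
  qed
  show ?thesis
    using neg1 neg2 mem by (intro exI[of _ "G ` crit \<union> H0"]) auto
qed



lemma bad_negligible:
  fixes \<Theta> :: "'a::euclidean_space set"
  assumes hyp: "Ck_hypersurface 3 \<Theta>" and cl: "closed \<Theta>"
  shows "negligible {z. infinite (closed_segment x z \<inter> \<Theta>)}"
proof -
  define \<F> where "\<F> = {U. \<exists>V \<phi> \<psi> b \<phi>' \<psi>'. chart \<Theta> U V \<phi> \<psi> b \<phi>' \<psi>'}"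
  have "\<And>U. U \<in> \<F> \<Longrightarrow> open U" unfolding \<F>_def chart_def by blast
  then obtain \<F>' where F': "\<F>' \<subseteq> \<F>" "countable \<F>'" "\<Union>\<F>' = \<Union>\<F>" by (rule Lindelof)
  have cov: "\<Theta> \<subseteq> \<Union>\<F>"
  proof
    fix p assume "p \<in> \<Theta>"
    then show "p \<in> \<Union>\<F>" using chart_exists[OF hyp] unfolding \<F>_def by blast
  qed
  have "\<forall>U\<in>\<F>'. \<exists>N. negligible N \<and> (\<forall>z q. q \<in> closed_segment x z \<and> q \<in> \<Theta> \<and> q \<in> U \<and>
             q islimpt (closed_segment x z \<inter> \<Theta>) \<longrightarrow> z \<in> N)"
  proof
    fix U assume "U \<in> \<F>'"
    then have "U \<in> \<F>" using F' by blast
    then obtain V \<phi> \<psi> b \<phi>' \<psi>' where "chart \<Theta> U V \<phi> \<psi> b \<phi>' \<psi>'" unfolding \<F>_def by blast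
    then show "\<exists>N. negligible N \<and> (\<forall>z q. q \<in> closed_segment x z \<and> q \<in> \<Theta> \<and> q \<in> U \<and>
             q islimpt (closed_segment x z \<inter> \<Theta>) \<longrightarrow> z \<in> N)" by (rule chart_bad)
  qed
  then obtain NF where NF: "\<And>U. U \<in> \<F>' \<Longrightarrow> negligible (NF U)"
    "\<And>U z q. U \<in> \<F>' \<Longrightarrow> q \<in> closed_segment x z \<Longrightarrow> q \<in> \<Theta> \<Longrightarrow> q \<in> U \<Longrightarrow>
             q islimpt (closed_segment x z \<inter> \<Theta>) \<Longrightarrow> z \<in> NF U"
    by metis
  have sub: "{z. infinite (closed_segment x z \<inter> \<Theta>)} \<subseteq> \<Union>(NF ` \<F>')"
  proof
    fix z assume "z \<in> {z. infinite (closed_segment x z \<inter> \<Theta>)}"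
    then have inf: "infinite (closed_segment x z \<inter> \<Theta>)" by simp
    have "compact (closed_segment x z \<inter> \<Theta>)" by (intro compact_Int_closed compact_segment cl)
    then obtain q where q: "q \<in> closed_segment x z \<inter> \<Theta>" "q islimpt (closed_segment x z \<inter> \<Theta>)"
      using inf unfolding compact_eq_Bolzano_Weierstrass by blast
    then obtain U where "U \<in> \<F>'" "q \<in> U" using cov F'(3) by blast
    then show "z \<in> \<Union>(NF ` \<F>')" using NF(2)[of U q z] q by blast
  qed
  have "negligible (\<Union>(NF ` \<F>'))"
    by (rule negligible_countable_Union) (use F'(2) NF(1) in auto)
  then show ?thesis using sub negligible_subset by blast
qed

theorem lemma3p13:
  fixes \<Theta> :: "'a::euclidean_space set"
  assumes "Ck_hypersurface 3 \<Theta>"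
    and "\<epsilon>0 > 0"
    and "\<forall>x. infdist x \<Theta> < \<epsilon>0 \<longrightarrow> (\<exists>!p. p \<in> \<Theta> \<and> norm (x - p) = infdist x \<Theta>)"
  shows "\<forall>x y (\<eta>::real). \<eta> > 0 \<longrightarrow>
           (\<exists>\<gamma>. path \<gamma> \<and> pathstart \<gamma> = x \<and> pathfinish \<gamma> = y \<and>
                 curve_length \<gamma> < ereal (norm (x - y) + \<eta>) \<and>
                 finite (path_image \<gamma> \<inter> \<Theta>))"
proof (intro allI impI)
  fix x y :: 'a and \<eta> :: real
  assume \<eta>: "\<eta> > 0"
  have ne: "\<Theta> \<noteq> {}"
  proof
    assume "\<Theta> = {}"
    then show False using assms(2,3) by (auto simp: infdist_def)
  qed
  have cl: "closed \<Theta>"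
  proof -
    have "closure \<Theta> \<subseteq> \<Theta>"
    proof
      fix w assume "w \<in> closure \<Theta>"
      then have "infdist w \<Theta> = 0" using in_closure_iff_infdist_zero ne by blast
      then have "\<exists>!p. p \<in> \<Theta> \<and> norm (w - p) = infdist w \<Theta>" using assms(2,3) \<open>infdist w \<Theta> = 0\<close> by (metis spec)
      then obtain p where "p \<in> \<Theta>" "norm (w - p) = 0" using \<open>infdist w \<Theta> = 0\<close> by auto
      then show "w \<in> \<Theta>" by simp
    qed
    then show ?thesis using closure_subset_eq by blast
  qed
  define mid where "mid = (1/2) *\<^sub>R (x + y)"
  define \<delta> where "\<delta> = \<eta> / 4"
  have \<delta>: "\<delta> > 0" using \<eta> by (simp add: \<delta>_def)
  have negB: "negligible ({z. infinite (closed_segment x z \<inter> \<Theta>)} \<union> {z. infinite (closed_segment y z \<inter> \<Theta>)})"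
    using bad_negligible[OF assms(1) cl, of x] bad_negligible[OF assms(1) cl, of y] by (rule negligible_Un)
  have "\<not> negligible (ball mid \<delta>)" using \<delta> by (intro open_not_negligible) auto
  then obtain z where z: "z \<in> ball mid \<delta>"
    "z \<notin> {z. infinite (closed_segment x z \<inter> \<Theta>)} \<union> {z. infinite (closed_segment y z \<inter> \<Theta>)}"
    using negB negligible_subset by blast
  define \<gamma> where "\<gamma> = linepath x z +++ linepath z y"
  have pi: "path_image \<gamma> = closed_segment x z \<union> closed_segment y z"
    by (simp add: \<gamma>_def path_image_join closed_segment_commute)
  have fin: "finite (path_image \<gamma> \<inter> \<Theta>)"
    using z(2) by (simp add: pi Int_Un_distrib2)
  define M where "M = norm (x - y) / 2 + \<delta>"
  have hm: "norm (mid - x) = norm (x - y) / 2" "norm (y - mid) = norm (x - y) / 2"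
  proof -
    have hh: "(1/2::real) *\<^sub>R v + (1/2) *\<^sub>R v = v" for v :: 'a by (simp flip: scaleR_add_left)
    have e1: "mid - x = (1/2) *\<^sub>R (y - x)" using hh[of x] by (simp add: mid_def algebra_simps)
    have e2: "y - mid = (1/2) *\<^sub>R (y - x)" using hh[of y] by (simp add: mid_def algebra_simps)
    show "norm (mid - x) = norm (x - y) / 2" "norm (y - mid) = norm (x - y) / 2"
      by (simp_all only: e1 e2 norm_scaleR norm_minus_commute[of y x])
  qed
  have zm: "norm (z - mid) < \<delta>" using z(1) by (simp add: dist_norm norm_minus_commute)
  have M1: "norm (z - x) \<le> M"
    using norm_triangle_ineq[of "z - mid" "mid - x"] zm hm by (simp add: M_def)
  have M2: "norm (y - z) \<le> M"
    using norm_triangle_ineq[of "y - mid" "mid - z"] zm hm by (simp add: M_def norm_minus_commute)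
  have "curve_length \<gamma> \<le> ereal (2 * M)"
    unfolding \<gamma>_def by (rule curve_length_lipschitz) (rule join_lip[OF M1 M2])
  also have "ereal (2 * M) < ereal (norm (x - y) + \<eta>)" using \<eta> by (simp add: M_def \<delta>_def)
  finally have len: "curve_length \<gamma> < ereal (norm (x - y) + \<eta>)" .
  have "path \<gamma>" "pathstart \<gamma> = x" "pathfinish \<gamma> = y" by (simp_all add: \<gamma>_def)
  then show "\<exists>\<gamma>. path \<gamma> \<and> pathstart \<gamma> = x \<and> pathfinish \<gamma> = y \<and>
                 curve_length \<gamma> < ereal (norm (x - y) + \<eta>) \<and> finite (path_image \<gamma> \<inter> \<Theta>)"
    using len fin by blast
qed

end
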